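(* In the session calculus, weak fairness of actions (WA) coincides with J-fairness of actions (JA): a path is WA-fair iff it is JA-fair.
   Context: Session calculus: threads $P ::= \mathbf{end} \mid \bigoplus_{i\in I} p_i!\lambda_i;P_i \mid \sum_{i\in I} p_i?\lambda_i;P_i \mid X \mid \mu X.P$ (guarded recursion), thread states additionally $\langle q!\lambda\rangle;P$; networks $p[\![P]\!]\mid 0\mid N\parallel N$ with distinct locations and closed threads, modulo associativity/commutativity/unit. Transitions: (choice) $p[\![\bigoplus_{i\in I}p_i!\lambda_i;P_i]\!]\parallel N \xrightarrow{\tau} p[\![\langle p_k!\lambda_k\rangle;P_k]\!]\parallel N$; (unfold) $p[\![\mu X.P]\!]\parallel N\xrightarrow{\tau} p[\![P\{\mu X.P/X\}]\!]\parallel N$; (comm) $p_k[\![\langle q!\lambda_k\rangle;Q]\!]\parallel q[\![\sum_{i\in I}p_i?\lambda_i;P_i]\!]\parallel N \xrightarrow{(p_k,\lambda_k,q)} p_k[\![Q]\!]\parallel q[\![P_k]\!]\parallel N$. $\mathrm{comp}(t)$ is the moving location for a $\tau$-transition and $\{p,q\}$ for label $(p,\lambda,q)$; $t,u$ are concurrent if $\mathrm{comp}(t)\cap\mathrm{comp}(u)=\emptyset$. A path is a network state with a maximal sequence of transitions. Actions as tasks: a label $\alpha$ is enabled in $N$ if some transition labelled $\alpha$ leaves $N$; a path engages in $\alpha$ if it contains a transition labelled $\alpha$. $\alpha$ is perpetually enabled on a path if enabled in all its states. WA: $\pi$ is WA-fair if for every suffix $\pi'$, every action perpetually enabled on $\pi'$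 is engaged in by $\pi'$. JA: $\alpha$ is enabled during a transition $u$ from $N$ to $N'$ if there is a transition $t$ from $N$ labelled $\alpha$ that is concurrent with $u$; $\alpha$ is continuously enabled on a path if enabled in all its states and during all its transitions; $\pi$ is JA-fair if for every suffix $\pi'$, every action continuously enabled on $\pi'$ is engaged in by $\pi'$. *)

theory Defs
  imports Main "HOL-Library.Extended_Nat"
begin

text \<open>Internal choice
  \<open>\<Oplus>\<^sub>i\<^sub>\<in>\<^sub>I p_i!\<lambda>_i;P_i\<close> and external choice \<open>\<Sum>\<^sub>i\<^sub>\<in>\<^sub>I p_i?\<lambda>_i;P_i\<close> are
  given by finite lists of branches (location, label, continuation).\<close>

datatype ('loc, 'lab) thread =
    End
  | Send "('loc \<times> 'lab \<times> ('loc, 'lab) thread) list"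
  | Recv "('loc \<times> 'lab \<times> ('loc, 'lab) thread) list"
  | Var nat
  | Mu nat "('loc, 'lab) thread"

text \<open>Thread states: a thread, or a committed output \<open>\<langle>q!\<lambda>\<rangle>;P\<close>.\<close>
datatype ('loc, 'lab) tstate =
    Thr "('loc, 'lab) thread"
  | Pend 'loc 'lab "('loc, 'lab) thread"

text \<open>Networks: finitely many located thread states with distinct locations;
  a partial map from locations (this quotients by assoc./comm./unit).\<close>
type_synonym ('loc, 'lab) net = "'loc \<Rightarrow> ('loc, 'lab) tstate option"

fun subst :: "nat \<Rightarrow> ('loc, 'lab) thread \<Rightarrow> ('loc, 'lab) thread \<Rightarrow> ('loc, 'lab) thread" where
  "subst X Q End = End"
| "subst X Q (Send bs) = Send (map (\<lambda>(p, l, P). (p, l, subst X Q P)) bs)"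
| "subst X Q (Recv bs) = Recv (map (\<lambda>(p, l, P). (p, l, subst X Q P)) bs)"
| "subst X Q (Var Y) = (if X = Y then Q else Var Y)"
| "subst X Q (Mu Y P) = (if X = Y then Mu Y P else Mu Y (subst X Q P))"

fun fv :: "('loc, 'lab) thread \<Rightarrow> nat set" where
  "fv End = {}"
| "fv (Send bs) = (\<Union>(p, l, P) \<in> set bs. fv P)"
| "fv (Recv bs) = (\<Union>(p, l, P) \<in> set bs. fv P)"
| "fv (Var X) = {X}"
| "fv (Mu X P) = fv P - {X}"

text \<open>Variables occurring unguarded (not under a prefix).\<close>
fun ufv :: "('loc, 'lab) thread \<Rightarrow> nat set" where
  "ufv End = {}"
| "ufv (Send bs) = {}"
| "ufv (Recv bs) = {}"
| "ufv (Var X) = {X}"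
| "ufv (Mu X P) = ufv P - {X}"

fun wf_thread :: "('loc, 'lab) thread \<Rightarrow> bool" where
  "wf_thread End = True"
| "wf_thread (Send bs) = (bs \<noteq> [] \<and> (\<forall>(p, l, P) \<in> set bs. wf_thread P))"
| "wf_thread (Recv bs) = (bs \<noteq> [] \<and> (\<forall>(p, l, P) \<in> set bs. wf_thread P))"
| "wf_thread (Var X) = True"
| "wf_thread (Mu X P) = (X \<notin> ufv P \<and> wf_thread P)"

definition closed_wf :: "('loc, 'lab) thread \<Rightarrow> bool" where
  "closed_wf P \<longleftrightarrow> fv P = {} \<and> wf_thread P"

fun wf_tstate :: "('loc, 'lab) tstate \<Rightarrow> bool" where
  "wf_tstate (Thr P) = closed_wf P"
| "wf_tstate (Pend q l P) = closed_wf P"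

definition wf_net :: "('loc, 'lab) net \<Rightarrow> bool" where
  "wf_net N \<longleftrightarrow> finite (dom N) \<and> (\<forall>p t. N p = Some t \<longrightarrow> wf_tstate t)"

datatype ('loc, 'lab) action = Tau | Act 'loc 'lab 'loc

text \<open>\<open>step N \<alpha> C N'\<close>: a transition from \<open>N\<close> to \<open>N'\<close> with label \<open>\<alpha>\<close> and
  set of components \<open>C = comp(t)\<close>.\<close>
inductive step :: "('loc, 'lab) net \<Rightarrow> ('loc, 'lab) action \<Rightarrow> 'loc set \<Rightarrow> ('loc, 'lab) net \<Rightarrow> bool" where
  choice: "N p = Some (Thr (Send bs)) \<Longrightarrow> (q, l, P) \<in> set bs \<Longrightarrow>
     step N Tau {p} (N(p \<mapsto> Pend q l P))"
| unfold: "N p = Some (Thr (Mu X P)) \<Longrightarrow>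
     step N Tau {p} (N(p \<mapsto> Thr (subst X (Mu X P) P)))"
| comm: "N p = Some (Pend q l Q) \<Longrightarrow> N q = Some (Thr (Recv bs)) \<Longrightarrow> (p, l, P) \<in> set bs \<Longrightarrow>
     step N (Act p l q) {p, q} (N(p \<mapsto> Thr Q, q \<mapsto> Thr P))"

definition enabled :: "('loc, 'lab) net \<Rightarrow> ('loc, 'lab) action \<Rightarrow> bool" where
  "enabled N \<alpha> \<longleftrightarrow> (\<exists>C N'. step N \<alpha> C N')"

definition enabled_during :: "('loc, 'lab) net \<Rightarrow> 'loc set \<Rightarrow> ('loc, 'lab) action \<Rightarrow> bool" where
  "enabled_during N C \<alpha> \<longleftrightarrow> (\<exists>C' N'. step N \<alpha> C' N' \<and> C' \<inter> C = {})"

text \<open>A path from \<open>N\<close>: states \<open>s 0 = N, s 1, \<dots>\<close>, transitions \<open>tr i\<close>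
  (label and components) from \<open>s i\<close> to \<open>s (i+1)\<close> for \<open>i < len\<close>;
  maximality: if \<open>len\<close> is finite, the last state has no outgoing transition.\<close>
definition is_path :: "('loc, 'lab) net \<Rightarrow> (nat \<Rightarrow> ('loc, 'lab) net)
    \<Rightarrow> (nat \<Rightarrow> ('loc, 'lab) action \<times> 'loc set) \<Rightarrow> enat \<Rightarrow> bool" where
  "is_path N s tr len \<longleftrightarrow> s 0 = N
     \<and> (\<forall>i. enat i < len \<longrightarrow> step (s i) (fst (tr i)) (snd (tr i)) (s (Suc i)))
     \<and> (\<forall>n. len = enat n \<longrightarrow> \<not> (\<exists>\<alpha> C N'. step (s n) \<alpha> C N'))"

text \<open>Fairness; the suffix starting at position \<open>k\<close> has states \<open>s j\<close>
  (\<open>k \<le> j \<le> len\<close>) and transitions \<open>tr j\<close> (\<open>k \<le> j < len\<close>).\<close>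
definition WA_fair :: "(nat \<Rightarrow> ('loc, 'lab) net) \<Rightarrow> (nat \<Rightarrow> ('loc, 'lab) action \<times> 'loc set) \<Rightarrow> enat \<Rightarrow> bool" where
  "WA_fair s tr len \<longleftrightarrow> (\<forall>k. enat k \<le> len \<longrightarrow> (\<forall>\<alpha>.
     (\<forall>j. k \<le> j \<and> enat j \<le> len \<longrightarrow> enabled (s j) \<alpha>)
     \<longrightarrow> (\<exists>j. k \<le> j \<and> enat j < len \<and> fst (tr j) = \<alpha>)))"

definition JA_fair :: "(nat \<Rightarrow> ('loc, 'lab) net) \<Rightarrow> (nat \<Rightarrow> ('loc, 'lab) action \<times> 'loc set) \<Rightarrow> enat \<Rightarrow> bool" where
  "JA_fair s tr len \<longleftrightarrow> (\<forall>k. enat k \<le> len \<longrightarrow> (\<forall>\<alpha>.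
     ((\<forall>j. k \<le> j \<and> enat j \<le> len \<longrightarrow> enabled (s j) \<alpha>)
      \<and> (\<forall>j. k \<le> j \<and> enat j < len \<longrightarrow> enabled_during (s j) (snd (tr j)) \<alpha>))
     \<longrightarrow> (\<exists>j. k \<le> j \<and> enat j < len \<and> fst (tr j) = \<alpha>)))"

end

theory Submission
  imports Defs
begin

lemma tau_during:
  assumes "step N u C N'" "u \<noteq> Tau" "enabled N Tau"
  shows "enabled_during N C Tau"
proof -
  from assms(1,2) obtain p l q Q bs P where u: "N p = Some (Pend q l Q)" "N q = Some (Thr (Recv bs))"
    and C: "C = {p, q}"
    by (cases rule: step.cases) auto
  from assms(3) obtain C' N'' where st: "step N Tau C' N''" unfolding enabled_def by blast
  then obtain r where "C' = {r}" "(\<exists>bs. N r = Some (Thr (Send bs))) \<or> (\<exists>X P. N r = Some (Thr (Mu X P)))"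
    by (cases rule: step.cases) auto
  then have "C' \<inter> C = {}" using u C by auto
  then show ?thesis using st unfolding enabled_during_def by blast
qed

lemma size_branch:
  "(p, l, P) \<in> set bs \<Longrightarrow> size P < size (Recv bs)"
  by (induction bs) auto

lemma act_step:
  assumes "step N u C N'" "u \<noteq> Act p l q" "N p = Some (Pend q l Q)"
    "N q = Some (Thr (Recv bs))"
  shows "(C \<inter> {p, q} = {} \<and> N' q = N q) \<or> (\<exists>R. N' q = Some (Thr R) \<and> size R < size (Recv bs))"
  using assms
proof (cases rule: step.cases)
  case (choice p' bs' q' l' P')
  then show ?thesis using assms by auto
next
  case (unfold p' X P')
  then show ?thesis using assms by auto
next
  case (comm p' q' l' Q' bs' P')
  show ?thesis
  proof (cases "q' = q")
    case True
    then show ?thesis using comm assms size_branch by auto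
  next
    case False
    have "p' \<noteq> q" using comm assms by auto
    moreover have "p' \<noteq> p" using comm assms False by auto
    moreover have "q' \<noteq> p" using comm assms by auto
    ultimately show ?thesis using comm False by auto
  qed
qed

theorem mainTheorem16:
  fixes N :: "('loc, 'lab) net"
    and s :: "nat \<Rightarrow> ('loc, 'lab) net"
    and tr :: "nat \<Rightarrow> ('loc, 'lab) action \<times> 'loc set"
    and len :: enat
  assumes "wf_net N"
    and "is_path N s tr len"
  shows "WA_fair s tr len \<longleftrightarrow> JA_fair s tr len"
proof
  assume "WA_fair s tr len"
  then show "JA_fair s tr len" unfolding WA_fair_def JA_fair_def by blast
next
  assume JA: "JA_fair s tr len"
  have steps: "\<And>i. enat i < len \<Longrightarrow> step (s i) (fst (tr i)) (snd (tr i)) (s (Suc i))"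
    using assms(2) unfolding is_path_def by blast
  show "WA_fair s tr len" unfolding WA_fair_def
  proof (intro allI impI)
    fix k \<alpha>
    assume k: "enat k \<le> len" and en: "\<forall>j. k \<le> j \<and> enat j \<le> len \<longrightarrow> enabled (s j) \<alpha>"
    show "\<exists>j. k \<le> j \<and> enat j < len \<and> fst (tr j) = \<alpha>"
    proof (rule ccontr)
      assume no: "\<not> ?thesis"
      show False
      proof (cases \<alpha>)
        case Tau
        have "\<forall>j. k \<le> j \<and> enat j < len \<longrightarrow> enabled_during (s j) (snd (tr j)) \<alpha>"
        proof (intro allI impI)
          fix j assume j: "k \<le> j \<and> enat j < len"
          then show "enabled_during (s j) (snd (tr j)) \<alpha>"
            using tau_during[OF steps[of j]] no en Tau by (auto intro: order.strict_implies_order)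
        qed
        then show False using JA k en no unfolding JA_fair_def by blast
      next
        case (Act p l q)
        define f where "f j = (case s j q of Some (Thr P) \<Rightarrow> size P | _ \<Rightarrow> 0)" for j
        have inv: "\<exists>Q bs P. s j p = Some (Pend q l Q) \<and> s j q = Some (Thr (Recv bs)) \<and> (p, l, P) \<in> set bs"
          if "k \<le> j" "enat j \<le> len" for j
        proof -
          from en that have "enabled (s j) \<alpha>" by blast
          then obtain C N' where "step (s j) (Act p l q) C N'" using Act unfolding enabled_def by blast
          then show ?thesis by (cases rule: step.cases) auto
        qed
        have key: "f (Suc j) \<le> f j \<and> (f (Suc j) = f j \<longrightarrow> enabled_during (s j) (snd (tr j)) \<alpha>)"
          if j: "k \<le> j" "enat j < len" for j
        proof -
          obtain Q bs P where a: "s j p = Some (Pend q l Q)" "s j q = Some (Thr (Recv bs))" "(p, l, P) \<in> set bs"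
            using inv[of j] j by (auto intro: order.strict_implies_order)
          have ne: "fst (tr j) \<noteq> Act p l q" using no j Act by auto
          have fj: "f j = size (Recv bs :: ('loc,'lab) thread)" using a unfolding f_def by simp
          from act_step[OF steps[OF j(2)] ne a(1) a(2)]
          show ?thesis
          proof
            assume d: "snd (tr j) \<inter> {p, q} = {} \<and> s (Suc j) q = s j q"
            have "step (s j) (Act p l q) {p, q} ((s j)(p \<mapsto> Thr Q, q \<mapsto> Thr P))"
              using a by (rule step.comm)
            then have "enabled_during (s j) (snd (tr j)) \<alpha>"
              using d Act unfolding enabled_during_def by blast
            moreover have "f (Suc j) = f j" using d unfolding f_def by simp
            ultimately show ?thesis by simp
          next
            assume "\<exists>R. s (Suc j) q = Some (Thr R) \<and> size R < size (Recv bs)"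
            then have "f (Suc j) < f j" using fj unfolding f_def by auto
            then show ?thesis by simp
          qed
        qed
        define m where "m = (LEAST v. \<exists>j. k \<le> j \<and> enat j \<le> len \<and> f j = v)"
        have "\<exists>j. k \<le> j \<and> enat j \<le> len \<and> f j = m"
          unfolding m_def by (rule LeastI[of _ "f k"]) (use k in auto)
        then obtain k' where k': "k \<le> k'" "enat k' \<le> len" "f k' = m" by blast
        have mle: "m \<le> f j" if "k \<le> j" "enat j \<le> len" for j
          unfolding m_def by (rule Least_le) (use that in auto)
        have mono: "enat j \<le> len \<longrightarrow> f j \<le> f k'" if "k' \<le> j" for j
          using that
        proof (induction j rule: dec_induct)
          case base then show ?case by simp
        next
          case (step j)
          show ?case
          proof
            assume "enat (Suc j) \<le> len"
            then have "enat j < len" by (simp add: Suc_ile_eq)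
            then show "f (Suc j) \<le> f k'" using key[of j] step k' by (auto intro: order.strict_implies_order)
          qed
        qed
        have "\<forall>j. k' \<le> j \<and> enat j < len \<longrightarrow> enabled_during (s j) (snd (tr j)) \<alpha>"
        proof (intro allI impI)
          fix j assume j: "k' \<le> j \<and> enat j < len"
          have s1: "enat (Suc j) \<le> len" using j by (simp add: Suc_ile_eq)
          have "f (Suc j) = f j"
            using key[of j] mono[of "Suc j"] mono[of j] mle[of "Suc j"] j k' s1
            by (auto intro: order.strict_implies_order)
          then show "enabled_during (s j) (snd (tr j)) \<alpha>" using key[of j] j k' by auto
        qed
        moreover have "\<forall>j. k' \<le> j \<and> enat j \<le> len \<longrightarrow> enabled (s j) \<alpha>" using en k' by auto
        ultimately obtain j where "k' \<le> j" "enat j < len" "fst (tr j) = \<alpha>"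
          using JA k' unfolding JA_fair_def by blast
        then show False using no k' by auto
      qed
    qed
  qed
qed

end
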